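(* Let $p\in(0,1)$ and $0<\alpha<\frac{p}{1-p}$. Let $E:\mathbb{R}_{\ge0}\to\mathbb{R}_{\ge0}$ satisfy: (i) $E$ is a proper error score; (ii) the limits $\lim_{x\to\infty}\frac{E'(x)}{E(x)}$, $\lim_{x\to\infty}\frac{E(x)}{E(ax)}$ and $\lim_{x\to\infty}\frac{E'(x)}{E'(ax)}$ exist (in the extended reals) for every $a\in(0,1)$; (iii) $-\log E(x)\in\omega(\log x)$ as $x\to\infty$, i.e. $\frac{-\log E(x)}{\log x}\to\infty$. Then $E$ is undulating (with respect to $p,\alpha$).
   Context: A proper error score is a function $E:\mathbb{R}_{\ge0}\to\mathbb{R}_{\ge0}$ that is twice differentiable, with $E(x)>0$ and $E'(x)<0$ for all $x\ge0$, $E(0)=c_0>0$, and $\lim_{x\to\infty}E(x)=0$. Given $p\in(0,1)$ and $0<\alpha<\frac{p}{1-p}$, an error score $E$ is undulating if there exist $z_1,z_2\in\mathbb{R}$ such that $\frac{E'(pm)}{E'(\alpha(1-p)m)}>\frac{\alpha(1-p)}{p}$ for all $m\ge 0$ with $m<z_1$, and $\frac{E'(pm)}{E'(\alpha(1-p)m)}<\frac{\alpha(1-p)}{p}$ for all $m>z_2$. *)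

theory Defs
  imports "HOL-Analysis.Analysis"
begin

text \<open>A proper error score on [0,inf). E is a total function real => real; only its
values on {0..} matter. E' is its derivative (one-sided at 0, i.e. within {0..});
E is twice differentiable there (E' has a derivative E'').\<close>
definition proper_error_score :: "(real \<Rightarrow> real) \<Rightarrow> (real \<Rightarrow> real) \<Rightarrow> bool" where
  "proper_error_score E E' \<longleftrightarrow>
     (\<forall>x\<ge>0. (E has_real_derivative E' x) (at x within {0..})) \<and>
     (\<exists>E''. \<forall>x\<ge>0. (E' has_real_derivative E'' x) (at x within {0..})) \<and>
     (\<forall>x\<ge>0. E x > 0) \<and> (\<forall>x\<ge>0. E' x < 0) \<and> E 0 > 0 \<and>
     (E \<longlongrightarrow> 0) at_top"

definition undulating :: "real \<Rightarrow> real \<Rightarrow> (real \<Rightarrow> real) \<Rightarrow> bool" where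
  "undulating p \<alpha> E' \<longleftrightarrow>
     (\<exists>z1 z2::real.
        (\<forall>m. 0 \<le> m \<and> m < z1 \<longrightarrow> E' (p * m) / E' (\<alpha> * (1 - p) * m) > \<alpha> * (1 - p) / p) \<and>
        (\<forall>m. 0 \<le> m \<and> m > z2 \<longrightarrow> E' (p * m) / E' (\<alpha> * (1 - p) * m) < \<alpha> * (1 - p) / p))"

end

theory Submission
  imports Defs
begin
lemma at0: "(x::real) > 0 \<Longrightarrow> at x within {0..} = at x"
proof -
  assume "x > 0"
  have "{0<..} \<subseteq> interior {0::real..}" by (rule interior_maximal) auto
  then show ?thesis using \<open>x>0\<close> by (intro at_within_interior) auto
qed

lemma key:
  fixes E E' :: "real \<Rightarrow> real" and c r X0 :: real
  assumes c: "0 < c" "c < 1" and r: "0 < r" "r < 1" and X0: "X0 \<ge> 1"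
    and rat: "\<forall>x\<ge>X0. E' x / E' (c * x) > r"
    and pes: "proper_error_score E E'"
    and lim: "filterlim (\<lambda>x. - ln (E x) / ln x) at_top at_top"
  shows False
proof -
  define g where "g x = - E' x" for x
  have der: "\<forall>x\<ge>0. (E has_real_derivative E' x) (at x within {0..})"
    and d2: "\<exists>E''. \<forall>x\<ge>0. (E' has_real_derivative E'' x) (at x within {0..})"
    and Epos: "\<forall>x\<ge>0. E x > 0" and E'neg: "\<forall>x\<ge>0. E' x < 0"
    using pes unfolding proper_error_score_def by auto
  have gpos: "g x > 0" if "x \<ge> 0" for x using E'neg that g_def by auto
  from d2 obtain E'' where E'': "\<forall>x\<ge>0. (E' has_real_derivative E'' x) (at x within {0..})" by blast
  have contE': "continuous_on {0..} E'"
    by (metis E'' DERIV_continuous atLeast_iff continuous_on_eq_continuous_within)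
  have contg: "continuous_on {X0..X0/c} g"
    unfolding g_def using X0 by (intro continuous_intros continuous_on_subset[OF contE']) auto
  have ne: "{X0..X0/c} \<noteq> {}" using c X0 by (simp add: field_simps)
  obtain xm where xm: "xm \<in> {X0..X0/c}" "\<forall>y\<in>{X0..X0/c}. g xm \<le> g y"
    using continuous_attains_inf[OF compact_Icc ne contg] by blast
  define m0 where "m0 = g xm"
  have m0: "m0 > 0" unfolding m0_def using xm X0 gpos by auto
  have step: "g x > r * g (c * x)" if "x \<ge> X0" for x
  proof -
    have "E' (c*x) < 0" using E'neg c X0 that by auto
    moreover have "r < E' x / E' (c*x)" using rat that by auto
    ultimately have "E' x < r * E' (c*x)" by (simp add: neg_less_divide_eq)
    then show ?thesis unfolding g_def by simp
  qed
  have P: "\<forall>x. X0 \<le> x \<and> x \<le> X0 / c^(Suc k) \<longrightarrow> g x \<ge> m0 * r^k" for k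
  proof (induction k)
    case 0
    then show ?case using xm m0_def by auto
  next
    case (Suc k)
    show ?case
    proof (intro allI impI)
      fix x assume x: "X0 \<le> x \<and> x \<le> X0 / c ^ Suc (Suc k)"
      show "m0 * r ^ Suc k \<le> g x"
      proof (cases "x \<le> X0 / c^(Suc k)")
        case True
        then have "m0 * r^k \<le> g x" using Suc x by auto
        moreover have "r^Suc k \<le> r^k" using r by (simp add: power_decreasing)
        ultimately show ?thesis using m0 r
          by (smt (verit, best) mult_left_mono)
      next
        case False
        have ck: "c^Suc k > 0" using c by simp
        have "X0 \<le> c * x"
        proof -
          have "X0 / c^Suc k < x" using False by simp
          hence "X0 < x * c^Suc k" using ck by (simp add: divide_less_eq)
          moreover have "x * c^Suc k \<le> x * c" using c x X0
            by (intro mult_left_mono) (auto simp: power_le_one)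
          ultimately show ?thesis by (simp add: mult.commute)
        qed
        moreover have "c * x \<le> X0 / c^Suc k"
        proof -
          have "x * c^(Suc (Suc k)) \<le> X0" using x c by (simp add: le_divide_eq)
          hence "(c*x) * c^Suc k \<le> X0" by (simp add: algebra_simps)
          thus ?thesis using ck by (simp add: le_divide_eq)
        qed
        ultimately have "m0 * r^k \<le> g (c*x)" using Suc by auto
        hence "r * (m0 * r^k) \<le> r * g (c*x)" using r by simp
        moreover have "r * g (c*x) < g x" using step x by auto
        ultimately show ?thesis by (simp add: algebra_simps)
      qed
    qed
  qed
  have lc: "ln c < 0" using c by simp
  have lr: "ln r < 0" using r by simp
  have lowg: "ln (g z) \<ge> ln m0 + (ln (z/X0) / (- ln c) + 1) * ln r" if z: "z \<ge> X0" for z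
  proof -
    define t where "t = ln (z/X0) / (- ln c)"
    have t0: "t \<ge> 0" unfolding t_def using z X0 lc by (intro divide_nonneg_pos) auto
    define k where "k = nat \<lceil>t\<rceil>"
    have k1: "real k \<ge> t" unfolding k_def using t0 by linarith
    have k2: "real k \<le> t + 1" unfolding k_def using t0 by linarith
    have "real k * ln c \<le> t * ln c" using k1 lc by (simp add: mult_right_mono_neg)
    also have "t * ln c = ln (X0 / z)" unfolding t_def using lc z X0
      by (simp add: ln_div field_simps)
    finally have "ln (c^k) \<le> ln (X0/z)" using c by (simp add: ln_realpow)
    hence "c^k \<le> X0/z" using c z X0 by (subst (asm) ln_le_cancel_iff) auto
    moreover have "c^Suc k \<le> c^k" using c by (simp add: power_decreasing)
    ultimately have "c^Suc k \<le> X0/z" by linarith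
    hence "z * c^Suc k \<le> X0" using z X0 by (simp add: le_divide_eq mult.commute)
    hence "z \<le> X0 / c^Suc k" using c by (simp add: le_divide_eq)
    hence "g z \<ge> m0 * r^k" using P z by blast
    hence "ln (g z) \<ge> ln (m0 * r^k)" using m0 r gpos[of z] z X0 by (subst ln_le_cancel_iff) auto
    also have "ln (m0 * r^k) = ln m0 + real k * ln r" using m0 r by (simp add: ln_mult ln_realpow)
    finally have "ln (g z) \<ge> ln m0 + real k * ln r" .
    moreover have "real k * ln r \<ge> (t+1) * ln r" using k2 lr by (simp add: mult_right_mono_neg)
    ultimately show ?thesis unfolding t_def by linarith
  qed
  define b where "b = ln r / (- ln c)"
  have b: "b < 0" unfolding b_def using lc lr by (simp add: zero_less_divide_iff)
  define K where "K = ln m0 + b * (ln 2 - ln X0) + ln r"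
  have bound: "- ln (E x) / ln x \<le> - (1 + b) + \<bar>K\<bar>" if x: "x \<ge> X0" "x \<ge> exp 1" for x
  proof -
    have xpos: "x > 0" using x X0 by auto
    have "\<forall>y. x \<le> y \<and> y \<le> 2*x \<longrightarrow> DERIV E y :> E' y"
      using der at0 xpos by (metis dual_order.strict_trans2 less_eq_real_def)
    then obtain z where z: "x < z" "z < 2*x" "E (2*x) - E x = (2*x - x) * E' z"
      using MVT2[of x "2*x" E E'] xpos by auto
    have "E (2*x) > 0" using Epos xpos by auto
    hence Ex: "E x > x * g z" using z unfolding g_def by (simp add: algebra_simps)
    have gz: "g z > 0" using gpos z xpos by auto
    have "ln (E x) > ln (x * g z)" using Ex xpos gz by (subst ln_less_cancel_iff) (auto intro: order.strict_trans[OF _ Ex])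
    hence l1: "ln (E x) > ln x + ln (g z)" using xpos gz by (simp add: ln_mult)
    have l2: "ln (g z) \<ge> ln m0 + (ln (z/X0) / (- ln c) + 1) * ln r" using lowg z x by auto
    have e: "(ln (z/X0) / (- ln c) + 1) * ln r = b * ln (z/X0) + ln r"
      unfolding b_def using lc by (simp add: field_simps)
    have "ln (z/X0) \<le> ln (2*x/X0)" using z X0 xpos by (subst ln_le_cancel_iff) (auto simp: divide_right_mono)
    hence l3: "b * ln (z/X0) \<ge> b * ln (2*x/X0)" using b by (simp add: mult_left_mono_neg)
    have l4: "ln (2*x/X0) = ln 2 + ln x - ln X0" using xpos X0 by (simp add: ln_div ln_mult)
    have l5: "b * ln (2*x/X0) = b * ln 2 + b * ln x - b * ln X0" unfolding l4 by (simp add: algebra_simps)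
    have "ln (E x) \<ge> (1 + b) * ln x + K"
      using l1 l2 l3 l5 e unfolding K_def by (simp add: algebra_simps)
    hence A: "- ln (E x) \<le> - (1+b) * ln x - K" by (simp add: algebra_simps)
    have lx: "ln x \<ge> 1" using x xpos ln_le_cancel_iff[of "exp 1" x] by simp
    have "- ln (E x) / ln x \<le> (- (1+b) * ln x - K) / ln x" by (rule divide_right_mono[OF A]) (use lx in auto)
    also have "\<dots> = - (1+b) - K / ln x" using lx by (simp add: field_simps)
    also have "\<dots> \<le> - (1+b) + \<bar>K\<bar>"
    proof -
      have "\<bar>K\<bar> * 1 \<le> \<bar>K\<bar> * ln x" using lx by (intro mult_left_mono) auto
      hence "\<bar>K\<bar> / ln x \<le> \<bar>K\<bar>" using lx by (simp add: divide_le_eq)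
      moreover have "- K / ln x \<le> \<bar>K\<bar> / ln x" using lx by (intro divide_right_mono) auto
      ultimately have "- K / ln x \<le> \<bar>K\<bar>" by linarith
      thus ?thesis by linarith
    qed
    finally show ?thesis .
  qed
  have "eventually (\<lambda>x. - ln (E x) / ln x > - (1 + b) + \<bar>K\<bar>) at_top"
    using lim by (simp add: filterlim_at_top_dense)
  moreover have "eventually (\<lambda>x. x \<ge> max X0 (exp 1)) at_top" by (rule eventually_ge_at_top)
  ultimately have "eventually (\<lambda>x::real. False) at_top"
    proof eventually_elim
    case (elim x)
    then show False using bound[of x] by auto
  qed
  thus False by simp
qed
theorem theorem2:
  fixes p \<alpha> :: real and E E' :: "real \<Rightarrow> real"
  assumes "0 < p" "p < 1" "0 < \<alpha>" "\<alpha> < p / (1 - p)"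
    and "proper_error_score E E'"
    and "\<exists>L::ereal. ((\<lambda>x. ereal (E' x / E x)) \<longlongrightarrow> L) at_top"
    and "\<forall>a. 0 < a \<and> a < 1 \<longrightarrow> (\<exists>L::ereal. ((\<lambda>x. ereal (E x / E (a * x))) \<longlongrightarrow> L) at_top)"
    and "\<forall>a. 0 < a \<and> a < 1 \<longrightarrow> (\<exists>L::ereal. ((\<lambda>x. ereal (E' x / E' (a * x))) \<longlongrightarrow> L) at_top)"
    and "filterlim (\<lambda>x. - ln (E x) / ln x) at_top at_top"
  shows "undulating p \<alpha> E'"
proof -
  define c where "c = \<alpha> * (1 - p) / p"
  have c0: "0 < c" unfolding c_def using assms(1-3) by simp
  have "\<alpha> * (1 - p) < p" using assms(1-4) by (simp add: less_divide_eq)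
  hence c1: "c < 1" unfolding c_def using assms(1) by simp
  obtain L :: ereal where L: "((\<lambda>x. ereal (E' x / E' (c * x))) \<longlongrightarrow> L) at_top"
    using assms(8) c0 c1 by blast
  have ev: "eventually (\<lambda>x. E' x / E' (c * x) < c) at_top"
  proof (cases "L < ereal c")
    case True
    from order_tendstoD(2)[OF L True] show ?thesis by simp
  next
    case False
    hence "ereal c \<le> L" by simp
    moreover have "ereal (c/2) < ereal c" using c0 by simp
    ultimately have "ereal (c/2) < L" by (rule order_less_le_trans[rotated])
    from order_tendstoD(1)[OF L this] obtain X where X: "\<forall>x\<ge>X. c/2 < E' x / E' (c * x)"
      by (auto simp: eventually_at_top_linorder)
    have False
      by (rule key[of c "c/2" "max X 1" E' E]) (use c0 c1 X assms(5,9) in auto)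
    thus ?thesis ..
  qed
  then obtain X where X: "\<forall>x\<ge>X. E' x / E' (c * x) < c" by (auto simp: eventually_at_top_linorder)
  show ?thesis unfolding undulating_def
  proof (intro exI conjI allI impI)
    fix m :: real assume "0 \<le> m \<and> m < 0" thus "E' (p * m) / E' (\<alpha> * (1 - p) * m) > \<alpha> * (1 - p) / p" by simp
  next
    fix m :: real assume m: "0 \<le> m \<and> m > X / p"
    hence "p * m > X" using assms(1) by (simp add: divide_less_eq mult.commute)
    hence "E' (p*m) / E' (c * (p*m)) < c" using X by auto
    moreover have "c * (p*m) = \<alpha> * (1 - p) * m" unfolding c_def using assms(1) by simp
    ultimately show "E' (p * m) / E' (\<alpha> * (1 - p) * m) < \<alpha> * (1 - p) / p" unfolding c_def by simp
  qed
qed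

end
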